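(* Let $n\ge1$. If $f,g,h:\Omega_n\to\mathbb{R}$ have mutually disjoint supports, then $\int(f+g+h)\,d\mu_n=\int(f+g)\,d\mu_n+\int(f+h)\,d\mu_n+\int(g+h)\,d\mu_n-\int f\,d\mu_n-\int g\,d\mu_n-\int h\,d\mu_n$.
   Context: For $n\ge1$, $\Omega_n=\{\omega_0,\dots,\omega_{2^n-1}\}$ is the set of strings $\alpha_0\alpha_1\cdots\alpha_n$ with $\alpha_k\in\{0,1\}$, $\alpha_0=0$, $\omega_j$ being the binary representation of $j$ (with $\alpha_n$ least significant). $D^n_{jk}=D^n(\omega_j,\omega_k)$ where $D^n(\omega,\omega')=2^{-n}\prod_{k=1}^n i^{|\alpha_k-\alpha_{k-1}|}\prod_{k=1}^n i^{-|\alpha'_k-\alpha'_{k-1}|}\,\delta_{\alpha_n\alpha'_n}$ for $\omega=\alpha_0\cdots\alpha_n$, $\omega'=\alpha'_0\cdots\alpha'_n$ ($i=\sqrt{-1}$). For $u:\Omega_n\to[0,\infty)$, $\int u\,d\mu_n=\sum_{j,k=0}^{2^n-1}\min[u(\omega_j),u(\omega_k)]\,D^n_{jk}$; for arbitrary $f:\Omega_n\to\mathbb{R}$ written as $f=f^+-f^-$ with $f^\pm\ge0$, $f^+f^-=0$, $\int f\,d\mu_n=\int f^+d\mu_n-\int f^-d\mu_n$. *)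

theory Defs
  imports "HOL-Analysis.Analysis"
begin

text \<open>Omega_n is identified with the index set {0..<2^n}: the index j stands for
  omega_j = alpha_0 alpha_1 ... alpha_n, the binary representation of j with n+1 digits,
  alpha_n least significant, so alpha_k = bit (n-k) of j (alpha_0 = 0 since j < 2^n).\<close>

definition alpha :: "nat \<Rightarrow> nat \<Rightarrow> nat \<Rightarrow> nat" where
  "alpha n j k = (j div 2 ^ (n - k)) mod 2"

definition Dn :: "nat \<Rightarrow> nat \<Rightarrow> nat \<Rightarrow> complex" where
  "Dn n j l = (1 / 2 ^ n) *
     (\<Prod>k\<in>{1..n}. \<i> ^ (nat \<bar>int (alpha n j k) - int (alpha n j (k - 1))\<bar>)) *
     (\<Prod>k\<in>{1..n}. inverse \<i> ^ (nat \<bar>int (alpha n l k) - int (alpha n l (k - 1))\<bar>)) *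
     (if alpha n j n = alpha n l n then 1 else 0)"

definition int_pos :: "nat \<Rightarrow> (nat \<Rightarrow> real) \<Rightarrow> complex" where
  "int_pos n u = (\<Sum>j<2 ^ n. \<Sum>l<2 ^ n. complex_of_real (min (u j) (u l)) * Dn n j l)"

definition int_mu :: "nat \<Rightarrow> (nat \<Rightarrow> real) \<Rightarrow> complex" where
  "int_mu n f = int_pos n (\<lambda>j. max (f j) 0) - int_pos n (\<lambda>j. max (- f j) 0)"

end

theory Submission
  imports Defs
begin

lemma int_pos_cong:
  assumes "\<And>j. j < 2^n \<Longrightarrow> u j = v j"
  shows "int_pos n u = int_pos n v"
  unfolding int_pos_def using assms by (intro sum.cong refl) auto

lemma min_ie:
  fixes a b c a' b' c' :: real
  assumes "a \<ge> 0" "b \<ge> 0" "c \<ge> 0" "a' \<ge> 0" "b' \<ge> 0" "c' \<ge> 0"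
    "a = 0 \<or> b = 0" "a = 0 \<or> c = 0" "b = 0 \<or> c = 0"
    "a' = 0 \<or> b' = 0" "a' = 0 \<or> c' = 0" "b' = 0 \<or> c' = 0"
  shows "min (a+b+c) (a'+b'+c') = min (a+b) (a'+b') + min (a+c) (a'+c') + min (b+c) (b'+c')
     - min a a' - min b b' - min c c'"
  using assms by (auto simp: min_def)

lemma int_pos_ie:
  fixes u v w :: "nat \<Rightarrow> real"
  assumes "\<And>j. j < 2^n \<Longrightarrow> u j \<ge> 0 \<and> v j \<ge> 0 \<and> w j \<ge> 0"
    "\<And>j. j < 2^n \<Longrightarrow> (u j = 0 \<or> v j = 0) \<and> (u j = 0 \<or> w j = 0) \<and> (v j = 0 \<or> w j = 0)"
  shows "int_pos n (\<lambda>j. u j + v j + w j) = int_pos n (\<lambda>j. u j + v j) + int_pos n (\<lambda>j. u j + w j)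
     + int_pos n (\<lambda>j. v j + w j) - int_pos n u - int_pos n v - int_pos n w"
proof -
  have "int_pos n (\<lambda>j. u j + v j) + int_pos n (\<lambda>j. u j + w j)
     + int_pos n (\<lambda>j. v j + w j) - int_pos n u - int_pos n v - int_pos n w
    = (\<Sum>j<2 ^ n. \<Sum>l<2 ^ n. complex_of_real (min (u j + v j) (u l + v l) + min (u j + w j) (u l + w l)
       + min (v j + w j) (v l + w l) - min (u j) (u l) - min (v j) (v l) - min (w j) (w l)) * Dn n j l)"
    unfolding int_pos_def
    by (simp add: sum.distrib[symmetric] sum_subtractf[symmetric] algebra_simps)
  also have "\<dots> = int_pos n (\<lambda>j. u j + v j + w j)"
    unfolding int_pos_def
  proof (intro sum.cong refl)
    fix j l :: nat assume "j \<in> {..<2^n}" "l \<in> {..<2^n}"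
    then have j: "j < 2^n" and l: "l < 2^n" by auto
    show "complex_of_real (min (u j + v j) (u l + v l) + min (u j + w j) (u l + w l)
       + min (v j + w j) (v l + w l) - min (u j) (u l) - min (v j) (v l) - min (w j) (w l)) * Dn n j l
      = complex_of_real (min (u j + v j + w j) (u l + v l + w l)) * Dn n j l"
      using min_ie[of "u j" "v j" "w j" "u l" "v l" "w l"] assms(1)[OF j] assms(1)[OF l]
        assms(2)[OF j] assms(2)[OF l] by simp
  qed
  finally show ?thesis by simp
qed

theorem corollary5p5:
  fixes n :: nat and f g h :: "nat \<Rightarrow> real"
  assumes "n \<ge> 1"
    and "\<forall>j<2 ^ n. f j = 0 \<or> g j = 0"
    and "\<forall>j<2 ^ n. f j = 0 \<or> h j = 0"
    and "\<forall>j<2 ^ n. g j = 0 \<or> h j = 0"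
  shows "int_mu n (\<lambda>j. f j + g j + h j) =
           int_mu n (\<lambda>j. f j + g j) + int_mu n (\<lambda>j. f j + h j) + int_mu n (\<lambda>j. g j + h j)
           - int_mu n f - int_mu n g - int_mu n h"
proof -
  let ?P = "\<lambda>x::real. max x 0"
  let ?N = "\<lambda>x::real. max (- x) 0"
  have eqs: "int_pos n (\<lambda>j. F (f j + g j + h j)) = int_pos n (\<lambda>j. F (f j) + F (g j) + F (h j))"
     "int_pos n (\<lambda>j. F (f j + g j)) = int_pos n (\<lambda>j. F (f j) + F (g j))"
     "int_pos n (\<lambda>j. F (f j + h j)) = int_pos n (\<lambda>j. F (f j) + F (h j))"
     "int_pos n (\<lambda>j. F (g j + h j)) = int_pos n (\<lambda>j. F (g j) + F (h j))"
    if "F 0 = 0" for F :: "real \<Rightarrow> real"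
    using assms that by (auto intro!: int_pos_cong) (metis add.right_neutral add_0)
  have P: "int_pos n (\<lambda>j. ?P (f j + g j + h j)) = int_pos n (\<lambda>j. ?P (f j + g j)) + int_pos n (\<lambda>j. ?P (f j + h j))
     + int_pos n (\<lambda>j. ?P (g j + h j)) - int_pos n (\<lambda>j. ?P (f j)) - int_pos n (\<lambda>j. ?P (g j)) - int_pos n (\<lambda>j. ?P (h j))"
  proof -
    have "int_pos n (\<lambda>j. ?P (f j) + ?P (g j) + ?P (h j)) = int_pos n (\<lambda>j. ?P (f j) + ?P (g j)) + int_pos n (\<lambda>j. ?P (f j) + ?P (h j))
     + int_pos n (\<lambda>j. ?P (g j) + ?P (h j)) - int_pos n (\<lambda>j. ?P (f j)) - int_pos n (\<lambda>j. ?P (g j)) - int_pos n (\<lambda>j. ?P (h j))"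
      by (rule int_pos_ie) (use assms in auto)
    then show ?thesis using eqs[of ?P] by simp
  qed
  have N: "int_pos n (\<lambda>j. ?N (f j + g j + h j)) = int_pos n (\<lambda>j. ?N (f j + g j)) + int_pos n (\<lambda>j. ?N (f j + h j))
     + int_pos n (\<lambda>j. ?N (g j + h j)) - int_pos n (\<lambda>j. ?N (f j)) - int_pos n (\<lambda>j. ?N (g j)) - int_pos n (\<lambda>j. ?N (h j))"
  proof -
    have "int_pos n (\<lambda>j. ?N (f j) + ?N (g j) + ?N (h j)) = int_pos n (\<lambda>j. ?N (f j) + ?N (g j)) + int_pos n (\<lambda>j. ?N (f j) + ?N (h j))
     + int_pos n (\<lambda>j. ?N (g j) + ?N (h j)) - int_pos n (\<lambda>j. ?N (f j)) - int_pos n (\<lambda>j. ?N (g j)) - int_pos n (\<lambda>j. ?N (h j))"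
      by (rule int_pos_ie) (use assms in auto)
    then show ?thesis using eqs[of ?N] by simp
  qed
  show ?thesis unfolding int_mu_def P N by (simp add: algebra_simps)
qed

end
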